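(* A fuzzy subset $\mu$ of a fuzzy $\Gamma$-hypersemigroup $(M,\circ)$ is a fuzzy $\Gamma$-hyper interior ideal of $(M,\circ)$ if and only if $(\chi_M\circ\alpha\circ\mu)\circ\beta\circ\chi_M\subseteq\mu$ for all $\alpha,\beta\in\Gamma$.
   Context: $M,\Gamma$ are nonempty sets; a fuzzy subset of $M$ is a map $M\to[0,1]$. A fuzzy $\Gamma$-hyperoperation assigns to each $(a,\gamma,b)\in M\times\Gamma\times M$ a fuzzy subset $a\circ\gamma\circ b$. For $a\in M$ and fuzzy $\mu$: $(a\circ\gamma\circ\mu)(r)=\bigvee_{t\in M}((a\circ\gamma\circ t)(r)\wedge\mu(t))$ if $\mu\ne0$, else $0$; $(\mu\circ\gamma\circ a)(r)=\bigvee_{t\in M}(\mu(t)\wedge(t\circ\gamma\circ a)(r))$ if $\mu\ne0$, else $0$. For fuzzy $\mu,\nu$: $(\mu\circ\gamma\circ\nu)(t)=\bigvee_{p,q\in M}(\mu(p)\wedge(p\circ\gamma\circ q)(t)\wedge\nu(q))$. $(M,\circ)$ is a fuzzy $\Gamma$-hypersemigroup if $(a\circ\alpha\circ b)\circ\beta\circ c=a\circ\alpha\circ(b\circ\beta\circ c)$ for all $a,b,c\in M$, $\alpha,\beta\in\Gamma$. $\chi_M$ is the constant function $1$. For fuzzy sets, $\mu\subseteq\nu$ means $\mu(x)\le\nu(x)$ for all $x$. A fuzzy subset $\mu$ is a fuzzy $\Gamma$-hyper interior ideal if $(x\circ\alpha\circ\mu)\circ\beta\circ y\subseteq\mu$ for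 all $x,y\in M$, $\alpha,\beta\in\Gamma$. *)

theory Defs
  imports Main "HOL.Real"
begin

text \<open>The sets M and Gamma are rendered as the (nonempty) types 'm and 'g.
  Fuzzy subsets are real-valued maps with values in [0,1]; the supremum
  of a family of values in [0,1] is the real Sup.\<close>

definition fuzzy_subset :: "('m \<Rightarrow> real) \<Rightarrow> bool" where
  "fuzzy_subset \<mu> \<longleftrightarrow> (\<forall>x. 0 \<le> \<mu> x \<and> \<mu> x \<le> 1)"

definition chiM :: "'m \<Rightarrow> real" where
  "chiM = (\<lambda>_. 1)"

text \<open>A fuzzy Gamma-hyperoperation: hop a g b is the fuzzy subset a o g o b.\<close>
definition fuzzy_hyperop :: "('m \<Rightarrow> 'g \<Rightarrow> 'm \<Rightarrow> 'm \<Rightarrow> real) \<Rightarrow> bool" where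
  "fuzzy_hyperop hop \<longleftrightarrow> (\<forall>a g b. fuzzy_subset (hop a g b))"

definition elem_fuzzy ::
  "('m \<Rightarrow> 'g \<Rightarrow> 'm \<Rightarrow> 'm \<Rightarrow> real) \<Rightarrow> 'm \<Rightarrow> 'g \<Rightarrow> ('m \<Rightarrow> real) \<Rightarrow> 'm \<Rightarrow> real" where
  "elem_fuzzy hop a g \<mu> r =
     (if \<mu> = (\<lambda>_. 0) then 0 else (SUP t. min (hop a g t r) (\<mu> t)))"

definition fuzzy_elem ::
  "('m \<Rightarrow> 'g \<Rightarrow> 'm \<Rightarrow> 'm \<Rightarrow> real) \<Rightarrow> ('m \<Rightarrow> real) \<Rightarrow> 'g \<Rightarrow> 'm \<Rightarrow> 'm \<Rightarrow> real" where
  "fuzzy_elem hop \<mu> g a r =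
     (if \<mu> = (\<lambda>_. 0) then 0 else (SUP t. min (\<mu> t) (hop t g a r)))"

definition fuzzy_fuzzy ::
  "('m \<Rightarrow> 'g \<Rightarrow> 'm \<Rightarrow> 'm \<Rightarrow> real) \<Rightarrow> ('m \<Rightarrow> real) \<Rightarrow> 'g \<Rightarrow> ('m \<Rightarrow> real) \<Rightarrow> 'm \<Rightarrow> real" where
  "fuzzy_fuzzy hop \<mu> g \<nu> t =
     (SUP pq. min (\<mu> (fst pq)) (min (hop (fst pq) g (snd pq) t) (\<nu> (snd pq))))"

definition fuzzy_Gamma_hypersemigroup :: "('m \<Rightarrow> 'g \<Rightarrow> 'm \<Rightarrow> 'm \<Rightarrow> real) \<Rightarrow> bool" where
  "fuzzy_Gamma_hypersemigroup hop \<longleftrightarrow> fuzzy_hyperop hop \<and>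
     (\<forall>a b c \<alpha> \<beta>. fuzzy_elem hop (hop a \<alpha> b) \<beta> c = elem_fuzzy hop a \<alpha> (hop b \<beta> c))"

definition fuzzy_subseteq :: "('m \<Rightarrow> real) \<Rightarrow> ('m \<Rightarrow> real) \<Rightarrow> bool" where
  "fuzzy_subseteq \<mu> \<nu> \<longleftrightarrow> (\<forall>x. \<mu> x \<le> \<nu> x)"

definition fuzzy_hyper_interior_ideal ::
  "('m \<Rightarrow> 'g \<Rightarrow> 'm \<Rightarrow> 'm \<Rightarrow> real) \<Rightarrow> ('m \<Rightarrow> real) \<Rightarrow> bool" where
  "fuzzy_hyper_interior_ideal hop \<mu> \<longleftrightarrow>
     (\<forall>x y \<alpha> \<beta>. fuzzy_subseteq (fuzzy_elem hop (elem_fuzzy hop x \<alpha> \<mu>) \<beta> y) \<mu>)"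

end

theory Submission
  imports Defs
begin

lemma sup_up: "(\<And>i. f i \<le> (1::real)) \<Longrightarrow> f i \<le> (SUP i. f i)"
  by (rule cSUP_upper) (auto simp: bdd_above_def)

lemma sup_le1: "(\<And>i. f i \<le> (c::real)) \<Longrightarrow> (SUP i. f i) \<le> c"
  by (rule cSUP_least) auto

lemma min_sup_le:
  assumes "\<And>i. min (a i) h \<le> (c::real)"
  shows "min (SUP i. a i) h \<le> c"
proof (cases "h \<le> c")
  case True then show ?thesis by simp
next
  case False
  then have "\<And>i. a i \<le> c" using assms by (metis min_le_iff_disj not_le order.trans le_less)
  then have "(SUP i. a i) \<le> c" by (rule sup_le1)
  then show ?thesis by simp
qed

theorem theorem4p16:
  fixes hop :: "'m \<Rightarrow> 'g \<Rightarrow> 'm \<Rightarrow> 'm \<Rightarrow> real" and \<mu> :: "'m \<Rightarrow> real"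
  assumes "fuzzy_Gamma_hypersemigroup hop"
    and "fuzzy_subset \<mu>"
  shows "fuzzy_hyper_interior_ideal hop \<mu> \<longleftrightarrow>
    (\<forall>\<alpha> \<beta>. fuzzy_subseteq (fuzzy_fuzzy hop (fuzzy_fuzzy hop chiM \<alpha> \<mu>) \<beta> chiM) \<mu>)"
proof -
  have h1: "\<And>a g b r. hop a g b r \<le> 1" and h0: "\<And>a g b r. 0 \<le> hop a g b r"
    using assms(1) unfolding fuzzy_Gamma_hypersemigroup_def fuzzy_hyperop_def fuzzy_subset_def
    by auto
  have m1: "\<And>x. \<mu> x \<le> 1" and m0: "\<And>x. 0 \<le> \<mu> x" using assms(2) unfolding fuzzy_subset_def by auto
  define E where "E x \<alpha> = elem_fuzzy hop x \<alpha> \<mu>" for x \<alpha>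
  define A where "A \<alpha> = fuzzy_fuzzy hop chiM \<alpha> \<mu>" for \<alpha>
  have A_def': "A \<alpha> t = (SUP pq. min 1 (min (hop (fst pq) \<alpha> (snd pq) t) (\<mu> (snd pq))))" for \<alpha> t
    unfolding A_def fuzzy_fuzzy_def chiM_def by simp
  have E1: "E x \<alpha> t \<le> 1" for x \<alpha> t
    unfolding E_def elem_fuzzy_def using h1 by (auto intro!: sup_le1 simp: min_le_iff_disj)
  have E0: "0 \<le> E x \<alpha> t" for x \<alpha> t
  proof (cases "\<mu> = (\<lambda>_. 0)")
    case True then show ?thesis by (simp add: E_def elem_fuzzy_def)
  next
    case False
    have "min (hop x \<alpha> t t) (\<mu> t) \<le> (SUP q. min (hop x \<alpha> q t) (\<mu> q))"
      by (rule sup_up) (simp add: h1 min_le_iff_disj)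
    then show ?thesis using False h0 m0 by (simp add: E_def elem_fuzzy_def) (meson min.bounded_iff order_trans)
  qed
  have Elow: "min (hop x \<alpha> q t) (\<mu> q) \<le> E x \<alpha> t" for x \<alpha> q t
  proof (cases "\<mu> = (\<lambda>_. 0)")
    case True then show ?thesis by (simp add: E_def elem_fuzzy_def)
  next
    case False
    have "min (hop x \<alpha> q t) (\<mu> q) \<le> (SUP q. min (hop x \<alpha> q t) (\<mu> q))"
      by (rule sup_up) (simp add: h1 min_le_iff_disj)
    then show ?thesis using False by (simp add: E_def elem_fuzzy_def)
  qed
  have Ehigh: "min (E x \<alpha> t) h \<le> c"
    if "\<And>q. min (min (hop x \<alpha> q t) (\<mu> q)) h \<le> c" "0 \<le> c" for x \<alpha> t h c
  proof (cases "\<mu> = (\<lambda>_. 0)")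
    case True then show ?thesis using that by (simp add: E_def elem_fuzzy_def min_le_iff_disj)
  next
    case False
    then show ?thesis unfolding E_def elem_fuzzy_def using that
      by (simp only: if_False) (rule min_sup_le)
  qed
  define F where "F x \<alpha> \<beta> y = fuzzy_elem hop (E x \<alpha>) \<beta> y" for x \<alpha> \<beta> y
  have Flow: "min (E x \<alpha> t) (hop t \<beta> y z) \<le> F x \<alpha> \<beta> y z" for x \<alpha> \<beta> y z t
  proof (cases "E x \<alpha> = (\<lambda>_. 0)")
    case True then show ?thesis by (simp add: F_def fuzzy_elem_def h0 min_le_iff_disj)
  next
    case False
    have "min (E x \<alpha> t) (hop t \<beta> y z) \<le> (SUP t. min (E x \<alpha> t) (hop t \<beta> y z))"
      by (rule sup_up) (simp add: h1 min_le_iff_disj)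
    then show ?thesis using False by (simp add: F_def fuzzy_elem_def)
  qed
  have Fhigh: "F x \<alpha> \<beta> y z \<le> c"
    if "\<And>t. min (E x \<alpha> t) (hop t \<beta> y z) \<le> c" "0 \<le> c" for x \<alpha> \<beta> y z c
    unfolding F_def fuzzy_elem_def using that by (auto intro!: sup_le1)
  have Bdef: "fuzzy_fuzzy hop (A \<alpha>) \<beta> chiM z = (SUP ty. min (A \<alpha> (fst ty)) (min (hop (fst ty) \<beta> (snd ty) z) 1))"
    for \<alpha> \<beta> z unfolding fuzzy_fuzzy_def chiM_def by simp
  have A1: "A \<alpha> t \<le> 1" for \<alpha> t unfolding A_def' by (rule sup_le1) simp
  show ?thesis
  proof
    assume I: "fuzzy_hyper_interior_ideal hop \<mu>"
    have I': "F x \<alpha> \<beta> y z \<le> \<mu> z" for x \<alpha> \<beta> y z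
      using I unfolding fuzzy_hyper_interior_ideal_def fuzzy_subseteq_def F_def E_def by blast
    show "\<forall>\<alpha> \<beta>. fuzzy_subseteq (fuzzy_fuzzy hop (fuzzy_fuzzy hop chiM \<alpha> \<mu>) \<beta> chiM) \<mu>"
    proof (intro allI, unfold fuzzy_subseteq_def, intro allI)
      fix \<alpha> \<beta> z
      show "fuzzy_fuzzy hop (fuzzy_fuzzy hop chiM \<alpha> \<mu>) \<beta> chiM z \<le> \<mu> z"
        unfolding A_def[symmetric] Bdef
      proof (rule sup_le1)
        fix ty :: "'m \<times> 'm"
        obtain t y where ty: "ty = (t, y)" by fastforce
        have "min (A \<alpha> t) (hop t \<beta> y z) \<le> \<mu> z"
          unfolding A_def'
        proof (rule min_sup_le)
          fix pq :: "'m \<times> 'm"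
          obtain p q where pq: "pq = (p, q)" by fastforce
          have "min (min (hop p \<alpha> q t) (\<mu> q)) (hop t \<beta> y z) \<le> min (E p \<alpha> t) (hop t \<beta> y z)"
            using Elow by (meson min.mono order_refl)
          also have "\<dots> \<le> F p \<alpha> \<beta> y z" by (rule Flow)
          also have "\<dots> \<le> \<mu> z" by (rule I')
          finally show "min (min 1 (min (hop (fst pq) \<alpha> (snd pq) t) (\<mu> (snd pq)))) (hop t \<beta> y z) \<le> \<mu> z"
            using pq h1[of p \<alpha> q t] by (simp add: min_absorb2)
        qed
        then show "min (A \<alpha> (fst ty)) (min (hop (fst ty) \<beta> (snd ty) z) 1) \<le> \<mu> z"
          using ty h1 by (simp add: min_absorb1)
      qed
    qed
  next
    assume B: "\<forall>\<alpha> \<beta>. fuzzy_subseteq (fuzzy_fuzzy hop (fuzzy_fuzzy hop chiM \<alpha> \<mu>) \<beta> chiM) \<mu>"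
    have B': "min (A \<alpha> t) (hop t \<beta> y z) \<le> \<mu> z" for \<alpha> \<beta> t y z
    proof -
      have "min (A \<alpha> (fst (t,y))) (min (hop (fst (t,y)) \<beta> (snd (t,y)) z) 1)
           \<le> (SUP ty. min (A \<alpha> (fst ty)) (min (hop (fst ty) \<beta> (snd ty) z) 1))"
        by (rule sup_up) (simp add: A1 min_le_iff_disj)
      also have "\<dots> = fuzzy_fuzzy hop (A \<alpha>) \<beta> chiM z" by (rule Bdef[symmetric])
      also have "\<dots> \<le> \<mu> z" using B unfolding fuzzy_subseteq_def A_def by blast
      finally show ?thesis using h1 by (simp add: min_absorb1)
    qed
    have Alow: "min (hop x \<alpha> q t) (\<mu> q) \<le> A \<alpha> t" for x \<alpha> q t
    proof -
      have "min 1 (min (hop (fst (x,q)) \<alpha> (snd (x,q)) t) (\<mu> (snd (x,q))))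
         \<le> (SUP pq. min 1 (min (hop (fst pq) \<alpha> (snd pq) t) (\<mu> (snd pq))))"
        by (rule sup_up) simp
      moreover have "min 1 (min (hop x \<alpha> q t) (\<mu> q)) = min (hop x \<alpha> q t) (\<mu> q)"
        using h1[of x \<alpha> q t] by (simp add: min_absorb2)
      ultimately show ?thesis unfolding A_def' by simp
    qed
    show "fuzzy_hyper_interior_ideal hop \<mu>"
      unfolding fuzzy_hyper_interior_ideal_def fuzzy_subseteq_def
    proof (intro allI)
      fix x y \<alpha> \<beta> z
      have "F x \<alpha> \<beta> y z \<le> \<mu> z"
      proof (rule Fhigh[OF _ m0])
        fix t
        show "min (E x \<alpha> t) (hop t \<beta> y z) \<le> \<mu> z"
        proof (rule Ehigh[OF _ m0])
          fix q
          have "min (min (hop x \<alpha> q t) (\<mu> q)) (hop t \<beta> y z) \<le> min (A \<alpha> t) (hop t \<beta> y z)"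
            using Alow by (meson min.mono order_refl)
          also have "\<dots> \<le> \<mu> z" by (rule B')
          finally show "min (min (hop x \<alpha> q t) (\<mu> q)) (hop t \<beta> y z) \<le> \<mu> z" .
        qed
      qed
      then show "fuzzy_elem hop (elem_fuzzy hop x \<alpha> \<mu>) \<beta> y z \<le> \<mu> z"
        unfolding F_def E_def .
    qed
  qed
qed

end
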